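(* Let $k\subset K$ be $\Delta$-fields, let $\Lambda\subset\Delta$ and $\Pi=\Delta\setminus\Lambda$. Assume that $C_k^\Lambda$ is a $\Pi$-differentially closed $\Pi$-field. If $K$ is a $\Delta$-constrained extension of $k$, then $C_K^\Lambda=C_k^\Lambda$.
   Context: All fields have characteristic zero; a $\Delta$-field is a field with a finite set $\Delta$ of commuting derivations. $C_k^\Lambda=\{c\in k:\partial c=0\ \forall\partial\in\Lambda\}$, which is a $\Pi$-field. A $\Pi$-field is $\Pi$-differentially closed if every finite system $P_1=\cdots=P_r=0,\ Q\ne0$ of $\Pi$-differential polynomials over it having a solution in some $\Pi$-extension field has a solution in it (if $\Pi=\emptyset$ this means algebraically closed). For $\eta=(\eta_1,\ldots,\eta_r)\in K^r$, $k\{\eta\}_\Delta$ is the ring generated over $k$ by the $\eta_i$ and all their derivatives. $\eta$ is constrained over $k$ if there exist $P_1,\ldots,P_s,Q\in k\{y_1,\ldots,y_r\}_\Delta$ with $P_j(\eta)=0$, $Q(\eta)\ne0$, such that for every $\Delta$-field $E\supset k$ and every $\zeta\in E^r$ with $P_j(\zeta)=0$ for all $j$ and $Q(\zeta)\ne0$, the map $\eta_i\mapsto\zeta_i$ induces a $k$-isomorphism of $\Delta$-rings $k\{\eta\}_\Delta\to k\{\zeta\}_\Delta$. $K$ is a ($\Delta$-)constrained extension of $k$ if every finite family of elements of $K$ is constrained over $k$. *)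

theory Defs
  imports "HOL-Algebra.Algebra" "HOL-Library.Poly_Mapping"
begin

definition derivation :: "('a,'b) ring_scheme \<Rightarrow> ('a \<Rightarrow> 'a) \<Rightarrow> bool" where
  "derivation R \<delta> \<longleftrightarrow> \<delta> \<in> carrier R \<rightarrow> carrier R \<and>
     (\<forall>x\<in>carrier R. \<forall>y\<in>carrier R.
        \<delta> (x \<oplus>\<^bsub>R\<^esub> y) = \<delta> x \<oplus>\<^bsub>R\<^esub> \<delta> y \<and>
        \<delta> (x \<otimes>\<^bsub>R\<^esub> y) = (\<delta> x \<otimes>\<^bsub>R\<^esub> y) \<oplus>\<^bsub>R\<^esub> (x \<otimes>\<^bsub>R\<^esub> \<delta> y))"

definition char_zero :: "('a,'b) ring_scheme \<Rightarrow> bool" where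
  "char_zero R \<longleftrightarrow> (\<forall>n::nat. n \<noteq> 0 \<longrightarrow> [n] \<cdot>\<^bsub>R\<^esub> \<one>\<^bsub>R\<^esub> \<noteq> \<zero>\<^bsub>R\<^esub>)"

definition diff_field :: "('a,'b) ring_scheme \<Rightarrow> 'd set \<Rightarrow> ('d \<Rightarrow> 'a \<Rightarrow> 'a) \<Rightarrow> bool" where
  "diff_field R \<Delta> D \<longleftrightarrow> field R \<and> char_zero R \<and> finite \<Delta> \<and>
     (\<forall>d\<in>\<Delta>. derivation R (D d)) \<and>
     (\<forall>d\<in>\<Delta>. \<forall>e\<in>\<Delta>. \<forall>x\<in>carrier R. D d (D e x) = D e (D d x))"

definition diff_subfield :: "('a,'b) ring_scheme \<Rightarrow> 'd set \<Rightarrow> ('d \<Rightarrow> 'a \<Rightarrow> 'a) \<Rightarrow> 'a set \<Rightarrow> bool" where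
  "diff_subfield R \<Delta> D k \<longleftrightarrow> subfield k R \<and> (\<forall>d\<in>\<Delta>. D d ` k \<subseteq> k)"

definition diff_ext :: "('a,'b) ring_scheme \<Rightarrow> 'd set \<Rightarrow> ('d \<Rightarrow> 'a \<Rightarrow> 'a) \<Rightarrow> 'a set \<Rightarrow>
    ('e,'c) ring_scheme \<Rightarrow> ('d \<Rightarrow> 'e \<Rightarrow> 'e) \<Rightarrow> ('a \<Rightarrow> 'e) \<Rightarrow> bool" where
  "diff_ext R \<Delta> D k E DE \<phi> \<longleftrightarrow> diff_field E \<Delta> DE \<and>
     \<phi> \<in> ring_hom (R\<lparr>carrier := k\<rparr>) E \<and>
     (\<forall>d\<in>\<Delta>. \<forall>x\<in>k. \<phi> (D d x) = DE d (\<phi> x))"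

definition constants :: "('a,'b) ring_scheme \<Rightarrow> 'd set \<Rightarrow> ('d \<Rightarrow> 'a \<Rightarrow> 'a) \<Rightarrow> 'a set \<Rightarrow> 'a set" where
  "constants R \<Lambda> D k = {c\<in>k. \<forall>d\<in>\<Lambda>. D d c = \<zero>\<^bsub>R\<^esub>}"

text \<open>Differential polynomials in the differential indeterminates y_0,...,y_(r-1).
  A variable (i, ds) stands for the derivative theta y_i, where theta is the composite of the
  derivations listed in ds. A monomial is a finitely supported exponent map on variables;
  a differential polynomial is a finite set of monomials with coefficients.\<close>

type_synonym 'd dmono = "(nat \<times> 'd list) \<Rightarrow>\<^sub>0 nat"

definition dpolys :: "'c set \<Rightarrow> 'd set \<Rightarrow> nat \<Rightarrow> ('d dmono set \<times> ('d dmono \<Rightarrow> 'c)) set" where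
  "dpolys k \<Delta> r = {(M, c). finite M \<and>
      (\<forall>m\<in>M. \<forall>v\<in>Poly_Mapping.keys m. fst v < r \<and> set (snd v) \<subseteq> \<Delta>) \<and> (\<forall>m\<in>M. c m \<in> k)}"

definition dvar_val :: "('d \<Rightarrow> 'a \<Rightarrow> 'a) \<Rightarrow> (nat \<Rightarrow> 'a) \<Rightarrow> nat \<times> 'd list \<Rightarrow> 'a" where
  "dvar_val D \<eta> v = foldr D (snd v) (\<eta> (fst v))"

definition dmono_val :: "('a,'b) ring_scheme \<Rightarrow> ('d \<Rightarrow> 'a \<Rightarrow> 'a) \<Rightarrow> (nat \<Rightarrow> 'a) \<Rightarrow> 'd dmono \<Rightarrow> 'a" where
  "dmono_val R D \<eta> m = finprod R (\<lambda>v. dvar_val D \<eta> v [^]\<^bsub>R\<^esub> Poly_Mapping.lookup m v) (Poly_Mapping.keys m)"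

definition dpoly_eval :: "('a,'b) ring_scheme \<Rightarrow> ('d \<Rightarrow> 'a \<Rightarrow> 'a) \<Rightarrow> ('c \<Rightarrow> 'a) \<Rightarrow>
    ('d dmono set \<times> ('d dmono \<Rightarrow> 'c)) \<Rightarrow> (nat \<Rightarrow> 'a) \<Rightarrow> 'a" where
  "dpoly_eval R D \<phi> P \<eta> = finsum R (\<lambda>m. \<phi> (snd P m) \<otimes>\<^bsub>R\<^esub> dmono_val R D \<eta> m) (fst P)"

definition dring_gen :: "('a,'b) ring_scheme \<Rightarrow> 'd set \<Rightarrow> ('d \<Rightarrow> 'a \<Rightarrow> 'a) \<Rightarrow> 'a set \<Rightarrow> nat \<Rightarrow> (nat \<Rightarrow> 'a) \<Rightarrow> 'a set" where
  "dring_gen R \<Delta> D k r \<eta> =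
     generate_ring R (k \<union> {dvar_val D \<eta> (i, ds) | i ds. i < r \<and> set ds \<subseteq> \<Delta>})"

text \<open>eta (a tuple of length r in the Delta-field R) is constrained over the Delta-subfield k.
  Extension fields E are taken with carrier in the same type 'a as R.\<close>
definition constrained :: "('a,'b) ring_scheme \<Rightarrow> 'd set \<Rightarrow> ('d \<Rightarrow> 'a \<Rightarrow> 'a) \<Rightarrow> 'a set \<Rightarrow>
    nat \<Rightarrow> (nat \<Rightarrow> 'a) \<Rightarrow> bool" where
  "constrained R \<Delta> D k r \<eta> \<longleftrightarrow>
    (\<exists>Ps Q. finite Ps \<and> Ps \<subseteq> dpolys k \<Delta> r \<and> Q \<in> dpolys k \<Delta> r \<and>
      (\<forall>P\<in>Ps. dpoly_eval R D id P \<eta> = \<zero>\<^bsub>R\<^esub>) \<and> dpoly_eval R D id Q \<eta> \<noteq> \<zero>\<^bsub>R\<^esub> \<and>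
      (\<forall>(E::'a ring) DE \<phi> \<zeta>. diff_ext R \<Delta> D k E DE \<phi> \<longrightarrow> (\<forall>i<r. \<zeta> i \<in> carrier E) \<longrightarrow>
         (\<forall>P\<in>Ps. dpoly_eval E DE \<phi> P \<zeta> = \<zero>\<^bsub>E\<^esub>) \<longrightarrow> dpoly_eval E DE \<phi> Q \<zeta> \<noteq> \<zero>\<^bsub>E\<^esub> \<longrightarrow>
         (\<exists>\<psi>. \<psi> \<in> ring_iso (R\<lparr>carrier := dring_gen R \<Delta> D k r \<eta>\<rparr>)
                           (E\<lparr>carrier := dring_gen E \<Delta> DE (\<phi> ` k) r \<zeta>\<rparr>) \<and>
               (\<forall>x\<in>k. \<psi> x = \<phi> x) \<and> (\<forall>i<r. \<psi> (\<eta> i) = \<zeta> i) \<and>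
               (\<forall>d\<in>\<Delta>. \<forall>x\<in>dring_gen R \<Delta> D k r \<eta>. \<psi> (D d x) = DE d (\<psi> x)))))"

definition constrained_ext :: "('a,'b) ring_scheme \<Rightarrow> 'd set \<Rightarrow> ('d \<Rightarrow> 'a \<Rightarrow> 'a) \<Rightarrow> 'a set \<Rightarrow> bool" where
  "constrained_ext R \<Delta> D k \<longleftrightarrow>
     (\<forall>r \<eta>. (\<forall>i<r. \<eta> i \<in> carrier R) \<longrightarrow> constrained R \<Delta> D k r \<eta>)"

text \<open>The subset C of R, with the derivations indexed by Pi, is a Pi-differentially closed Pi-field.
  Extension fields are taken with carrier in the type 'a.\<close>
definition diff_closed :: "('a,'b) ring_scheme \<Rightarrow> 'd set \<Rightarrow> ('d \<Rightarrow> 'a \<Rightarrow> 'a) \<Rightarrow> 'a set \<Rightarrow> bool" where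
  "diff_closed R \<Theta> D C \<longleftrightarrow> diff_field (R\<lparr>carrier := C\<rparr>) \<Theta> D \<and>
    (\<forall>n Ps Q. finite Ps \<longrightarrow> Ps \<subseteq> dpolys C \<Theta> n \<longrightarrow> Q \<in> dpolys C \<Theta> n \<longrightarrow>
      (\<exists>(E::'a ring) DE \<phi> \<zeta>. diff_ext R \<Theta> D C E DE \<phi> \<and> (\<forall>i<n. \<zeta> i \<in> carrier E) \<and>
         (\<forall>P\<in>Ps. dpoly_eval E DE \<phi> P \<zeta> = \<zero>\<^bsub>E\<^esub>) \<and> dpoly_eval E DE \<phi> Q \<zeta> \<noteq> \<zero>\<^bsub>E\<^esub>) \<longrightarrow>
      (\<exists>\<eta>. (\<forall>i<n. \<eta> i \<in> C) \<and>
         (\<forall>P\<in>Ps. dpoly_eval R D id P \<eta> = \<zero>\<^bsub>R\<^esub>) \<and> dpoly_eval R D id Q \<eta> \<noteq> \<zero>\<^bsub>R\<^esub>))"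

end

theory Submission
  imports Defs
begin

definition trunc :: "('a,'b) ring_scheme \<Rightarrow> 'a ring" where
 "trunc K = \<lparr>carrier = carrier K, monoid.mult = monoid.mult K, monoid.one = \<one>\<^bsub>K\<^esub>, ring.zero = \<zero>\<^bsub>K\<^esub>, ring.add = ring.add K\<rparr>"
lemma trunc_simps[simp]: "carrier (trunc K) = carrier K" "monoid.mult (trunc K) = monoid.mult K"
  "monoid.one (trunc K) = monoid.one K" "ring.zero (trunc K) = ring.zero K" "ring.add (trunc K) = ring.add K"
  by (simp_all add: trunc_def)
lemma trunc_finprod[simp]: "finprod (trunc K) = finprod K"
  by (auto simp: fun_eq_iff finprod_def)
lemma trunc_finsum[simp]: "finsum (trunc K) = finsum K"
  by (auto simp: fun_eq_iff finprod_def finsum_def)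
lemma trunc_pow[simp]: "pow (trunc K) = (pow K :: _ \<Rightarrow> nat \<Rightarrow> _)"
  by (auto simp: fun_eq_iff nat_pow_def)
lemma trunc_field: assumes "field K" shows "field (trunc K)"
proof -
  interpret field K by fact
  have cr: "cring (trunc K)"
    apply (rule cringI)
      apply (rule abelian_groupI)
           apply (auto simp: a_ac l_distr)[5]
     apply (metis a_inv_closed l_neg trunc_simps(1) trunc_simps(4) trunc_simps(5))
    apply (rule comm_monoidI) apply (auto simp: m_ac)[5] apply (simp add: l_distr)
    done
  show ?thesis
    apply (rule cring.cring_fieldI2[OF cr])
     apply simp
    apply simp
    using field_Units Units_r_inv_ex by blast
qed

definition closedset :: "('a,'b) ring_scheme \<Rightarrow> 'a set \<Rightarrow> bool" where
  "closedset K S \<longleftrightarrow> S \<subseteq> carrier K \<and> \<zero>\<^bsub>K\<^esub> \<in> S \<and> \<one>\<^bsub>K\<^esub> \<in> S \<and>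
     (\<forall>x\<in>S. \<forall>y\<in>S. x \<oplus>\<^bsub>K\<^esub> y \<in> S \<and> x \<otimes>\<^bsub>K\<^esub> y \<in> S) \<and> (\<forall>x\<in>S. \<ominus>\<^bsub>K\<^esub> x \<in> S) \<and>
     (\<forall>x\<in>S. x \<noteq> \<zero>\<^bsub>K\<^esub> \<longrightarrow> inv\<^bsub>K\<^esub> x \<in> S)"

locale dctx = field K for K (structure) +
  fixes \<Delta> :: "'d set" and D :: "'d \<Rightarrow> 'a \<Rightarrow> 'a"
  assumes dder: "\<And>d. d \<in> \<Delta> \<Longrightarrow> derivation K (D d)"
  and dcomm: "\<And>d e x. d \<in> \<Delta> \<Longrightarrow> e \<in> \<Delta> \<Longrightarrow> x \<in> carrier K \<Longrightarrow> D d (D e x) = D e (D d x)"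
begin

lemma D_closed[simp]: "d \<in> \<Delta> \<Longrightarrow> x \<in> carrier K \<Longrightarrow> D d x \<in> carrier K"
  using dder unfolding derivation_def by blast
lemma D_add: "d \<in> \<Delta> \<Longrightarrow> x \<in> carrier K \<Longrightarrow> y \<in> carrier K \<Longrightarrow> D d (x \<oplus> y) = D d x \<oplus> D d y"
  using dder unfolding derivation_def by blast
lemma D_mult: "d \<in> \<Delta> \<Longrightarrow> x \<in> carrier K \<Longrightarrow> y \<in> carrier K \<Longrightarrow> D d (x \<otimes> y) = D d x \<otimes> y \<oplus> x \<otimes> D d y"
  using dder unfolding derivation_def by blast
lemma D_zero[simp]: "d \<in> \<Delta> \<Longrightarrow> D d \<zero> = \<zero>"
proof -
  assume d: "d \<in> \<Delta>"
  have "D d \<zero> \<oplus> D d \<zero> = D d \<zero> \<oplus> \<zero>" using D_add[OF d, of \<zero> \<zero>] d by simp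
  then show ?thesis using d by (meson D_closed add.l_cancel zero_closed)
qed
lemma D_one[simp]: "d \<in> \<Delta> \<Longrightarrow> D d \<one> = \<zero>"
proof -
  assume d: "d \<in> \<Delta>"
  have "D d \<one> \<oplus> D d \<one> = D d \<one> \<oplus> \<zero>" using D_mult[OF d, of \<one> \<one>] d by simp
  then show ?thesis using d by (meson D_closed add.l_cancel one_closed zero_closed)
qed
lemma D_neg_const: "d \<in> \<Delta> \<Longrightarrow> x \<in> carrier K \<Longrightarrow> D d x = \<zero> \<Longrightarrow> D d (\<ominus> x) = \<zero>"
proof -
  assume d: "d \<in> \<Delta>" and x: "x \<in> carrier K" and dx: "D d x = \<zero>"
  have "D d (x \<oplus> \<ominus> x) = \<zero>" using d x by (simp add: r_neg)
  then have "D d x \<oplus> D d (\<ominus> x) = \<zero>" using D_add[OF d x, of "\<ominus> x"] x by simp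
  then show ?thesis using dx d x by simp
qed
lemma D_inv_const: "d \<in> \<Delta> \<Longrightarrow> x \<in> carrier K \<Longrightarrow> x \<noteq> \<zero> \<Longrightarrow> D d x = \<zero> \<Longrightarrow> D d (inv x) = \<zero>"
proof -
  assume d: "d \<in> \<Delta>" and x: "x \<in> carrier K" and x0: "x \<noteq> \<zero>" and dx: "D d x = \<zero>"
  have xu: "x \<in> Units K" using x x0 field_Units by blast
  have ic: "inv x \<in> carrier K" using xu by simp
  have "D d (x \<otimes> inv x) = \<zero>" using d xu by simp
  then have "x \<otimes> D d (inv x) = \<zero>" using D_mult[OF d x ic] dx ic d x by simp
  then show ?thesis using x0 x ic d integral D_closed[OF d ic] by blast
qed

lemma D_finsum: assumes d: "d \<in> \<Delta>" and fin: "finite A" and f: "f \<in> A \<rightarrow> carrier K"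
  shows "D d (finsum K f A) = finsum K (\<lambda>a. D d (f a)) A"
  using fin f
proof (induct A rule: finite_induct)
  case empty then show ?case using d by simp
next
  case (insert a A)
  then show ?case using d by (simp add: D_add Pi_def)
qed

definition csts :: "'d set \<Rightarrow> 'a set \<Rightarrow> 'a set" where
  "csts \<Lambda> S = constants K \<Lambda> D S"

lemma closedset_csts:
  assumes L: "\<Lambda> \<subseteq> \<Delta>" and S: "closedset K S"
  shows "closedset K (constants K \<Lambda> D S)"
proof -
  have Sc: "S \<subseteq> carrier K" using S unfolding closedset_def by blast
  show ?thesis
    unfolding closedset_def constants_def
  proof (intro conjI ballI impI)
    show "{c \<in> S. \<forall>d\<in>\<Lambda>. D d c = \<zero>} \<subseteq> carrier K" using Sc by blast
    show "\<zero> \<in> {c \<in> S. \<forall>d\<in>\<Lambda>. D d c = \<zero>}" using S L unfolding closedset_def by auto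
    show "\<one> \<in> {c \<in> S. \<forall>d\<in>\<Lambda>. D d c = \<zero>}" using S L unfolding closedset_def by auto
  next
    fix x y assume x: "x \<in> {c \<in> S. \<forall>d\<in>\<Lambda>. D d c = \<zero>}" and y: "y \<in> {c \<in> S. \<forall>d\<in>\<Lambda>. D d c = \<zero>}"
    have xc: "x \<in> carrier K" and yc: "y \<in> carrier K" using x y Sc by auto
    show "x \<oplus> y \<in> {c \<in> S. \<forall>d\<in>\<Lambda>. D d c = \<zero>}"
      using x y S L xc yc unfolding closedset_def by (auto simp: D_add)
    show "x \<otimes> y \<in> {c \<in> S. \<forall>d\<in>\<Lambda>. D d c = \<zero>}"
      using x y S L xc yc unfolding closedset_def by (auto simp: D_mult)
  next
    fix x assume x: "x \<in> {c \<in> S. \<forall>d\<in>\<Lambda>. D d c = \<zero>}"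
    have xc: "x \<in> carrier K" using x Sc by auto
    show "\<ominus> x \<in> {c \<in> S. \<forall>d\<in>\<Lambda>. D d c = \<zero>}"
      using x S L xc unfolding closedset_def by (auto intro: D_neg_const)
    assume "x \<noteq> \<zero>"
    then show "inv x \<in> {c \<in> S. \<forall>d\<in>\<Lambda>. D d c = \<zero>}"
      using x S L xc unfolding closedset_def by (auto intro: D_inv_const)
  qed
qed

lemma closedset_carrier: "closedset K (carrier K)"
  unfolding closedset_def using field_Units by auto

lemma closedset_subfield: assumes "subfield S K" shows "closedset K S"
proof -
  note P = subringE[OF subfieldE(1)[OF assms]]
  show ?thesis unfolding closedset_def
    using P subfield_m_inv(1)[OF assms] by auto
qed

lemma closedset_finsum: assumes S: "closedset K S" and fin: "finite A" and f: "f \<in> A \<rightarrow> S" shows "finsum K f A \<in> S"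
  using fin f
proof (induct A rule: finite_induct)
  case empty then show ?case using S by (simp add: closedset_def)
next
  case (insert a A)
  have "f \<in> A \<rightarrow> carrier K" "f a \<in> carrier K" using insert(4) S unfolding closedset_def by auto
  then show ?case using insert S unfolding closedset_def by (simp add: Pi_def)
qed

lemma closedset_finprod: assumes S: "closedset K S" and fin: "finite A" and f: "f \<in> A \<rightarrow> S" shows "finprod K f A \<in> S"
  using fin f
proof (induct A rule: finite_induct)
  case empty then show ?case using S by (simp add: closedset_def)
next
  case (insert a A)
  have "f \<in> A \<rightarrow> carrier K" "f a \<in> carrier K" using insert(4) S unfolding closedset_def by auto
  then show ?case using insert S unfolding closedset_def by (simp add: Pi_def)
qed

lemma closedset_pow: "closedset K S \<Longrightarrow> x \<in> S \<Longrightarrow> x [^] (n::nat) \<in> S"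
proof (induct n)
  case 0 then show ?case by (simp add: closedset_def)
next
  case (Suc n)
  then show ?case unfolding closedset_def by simp
qed


lemma foldr_cst:
  assumes L: "\<Lambda> \<subseteq> \<Delta>" and S: "closedset K S" and Sd: "\<And>d x. d \<in> \<Delta> \<Longrightarrow> x \<in> S \<Longrightarrow> D d x \<in> S"
    and x: "x \<in> constants K \<Lambda> D S" and ds: "set ds \<subseteq> \<Delta>"
  shows "foldr D ds x \<in> constants K \<Lambda> D S"
  using ds
proof (induct ds)
  case Nil then show ?case using x by simp
next
  case (Cons e ds)
  then have y: "foldr D ds x \<in> constants K \<Lambda> D S" and e: "e \<in> \<Delta>" by auto
  have Sc: "S \<subseteq> carrier K" using S unfolding closedset_def by blast
  have yS: "foldr D ds x \<in> S" and yc: "foldr D ds x \<in> carrier K" and y0: "\<forall>d\<in>\<Lambda>. D d (foldr D ds x) = \<zero>"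
    using y Sc unfolding constants_def by auto
  have "\<forall>d\<in>\<Lambda>. D d (D e (foldr D ds x)) = \<zero>"
    using dcomm[OF _ e yc] y0 L e by auto
  then show ?case using Sd[OF e yS] by (simp add: constants_def)
qed

lemma foldr_zero:
  assumes L: "\<Lambda> \<subseteq> \<Delta>" and S: "closedset K S" and Sd: "\<And>d x. d \<in> \<Delta> \<Longrightarrow> x \<in> S \<Longrightarrow> D d x \<in> S"
    and x: "x \<in> constants K \<Lambda> D S" and ds: "set ds \<subseteq> \<Delta>" and dl: "set ds \<inter> \<Lambda> \<noteq> {}"
  shows "foldr D ds x = \<zero>"
  using ds dl
proof (induct ds)
  case Nil then show ?case by simp
next
  case (Cons e ds)
  then have e: "e \<in> \<Delta>" and dsD: "set ds \<subseteq> \<Delta>" by auto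
  show ?case
  proof (cases "e \<in> \<Lambda>")
    case True
    have "foldr D ds x \<in> constants K \<Lambda> D S" by (rule foldr_cst[OF L S Sd x dsD])
    then show ?thesis using True by (simp add: constants_def)
  next
    case False
    then have "set ds \<inter> \<Lambda> \<noteq> {}" using Cons(3) by auto
    then have "foldr D ds x = \<zero>" using Cons(1) dsD by blast
    then show ?thesis using e by simp
  qed
qed

lemma dmono_cst:
  assumes L: "\<Lambda> \<subseteq> \<Delta>" and S: "closedset K S" and Sd: "\<And>d x. d \<in> \<Delta> \<Longrightarrow> x \<in> S \<Longrightarrow> D d x \<in> S"
    and eta: "\<forall>i<r. \<eta> i \<in> constants K \<Lambda> D S"
    and m: "\<forall>v\<in>Poly_Mapping.keys m. fst v < r \<and> set (snd v) \<subseteq> \<Delta>"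
  shows "dmono_val K D \<eta> m \<in> constants K \<Lambda> D S"
proof -
  have CS: "closedset K (constants K \<Lambda> D S)" by (rule closedset_csts[OF L S])
  have "\<forall>v\<in>Poly_Mapping.keys m. dvar_val D \<eta> v \<in> constants K \<Lambda> D S"
    using m eta foldr_cst[OF L S Sd] unfolding dvar_val_def by blast
  then show ?thesis unfolding dmono_val_def
    by (auto intro!: closedset_finprod[OF CS] closedset_pow[OF CS])
qed

lemma dmono_zero:
  assumes L: "\<Lambda> \<subseteq> \<Delta>" and S: "closedset K S" and Sd: "\<And>d x. d \<in> \<Delta> \<Longrightarrow> x \<in> S \<Longrightarrow> D d x \<in> S"
    and eta: "\<forall>i<r. \<eta> i \<in> constants K \<Lambda> D S"
    and m: "\<forall>v\<in>Poly_Mapping.keys m. fst v < r \<and> set (snd v) \<subseteq> \<Delta>"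
    and bad: "\<not> (\<forall>v\<in>Poly_Mapping.keys m. set (snd v) \<subseteq> \<Delta> - \<Lambda>)"
  shows "dmono_val K D \<eta> m = \<zero>"
proof -
  have CS: "closedset K (constants K \<Lambda> D S)" by (rule closedset_csts[OF L S])
  have CSc: "constants K \<Lambda> D S \<subseteq> carrier K" using CS unfolding closedset_def by blast
  have all: "\<forall>v\<in>Poly_Mapping.keys m. dvar_val D \<eta> v \<in> constants K \<Lambda> D S"
    using m eta foldr_cst[OF L S Sd] unfolding dvar_val_def by blast
  obtain v where v: "v \<in> Poly_Mapping.keys m" and vb: "set (snd v) \<inter> \<Lambda> \<noteq> {}"
    using bad m by blast
  have z: "dvar_val D \<eta> v = \<zero>"
    unfolding dvar_val_def using foldr_zero[OF L S Sd, of "\<eta> (fst v)" "snd v"] v vb m eta by blast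
  have lk: "Poly_Mapping.lookup m v \<noteq> 0" using v by (simp add: in_keys_iff)
  let ?f = "\<lambda>v. dvar_val D \<eta> v [^] Poly_Mapping.lookup m v"
  have fc: "?f \<in> Poly_Mapping.keys m \<rightarrow> carrier K" using all CSc by auto
  have ins: "Poly_Mapping.keys m = insert v (Poly_Mapping.keys m - {v})" using v by blast
  have "finprod K ?f (Poly_Mapping.keys m) = ?f v \<otimes> finprod K ?f (Poly_Mapping.keys m - {v})"
    by (subst ins, rule finprod_insert) (use fc v in auto)
  also have "?f v = \<zero>" using z lk by (simp add: nat_pow_zero)
  finally show ?thesis unfolding dmono_val_def using fc by (simp add: Pi_def)
qed

lemma dpoly_cst:
  assumes L: "\<Lambda> \<subseteq> \<Delta>" and S: "closedset K S" and Sd: "\<And>d x. d \<in> \<Delta> \<Longrightarrow> x \<in> S \<Longrightarrow> D d x \<in> S"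
    and eta: "\<forall>i<r. \<eta> i \<in> constants K \<Lambda> D S"
    and P: "P \<in> dpolys (constants K \<Lambda> D S) \<Delta> r"
  shows "dpoly_eval K D id P \<eta> \<in> constants K \<Lambda> D S"
proof -
  have CS: "closedset K (constants K \<Lambda> D S)" by (rule closedset_csts[OF L S])
  obtain M c where Pd: "P = (M, c)" by (cases P)
  have fin: "finite M" and mk: "\<forall>m\<in>M. \<forall>v\<in>Poly_Mapping.keys m. fst v < r \<and> set (snd v) \<subseteq> \<Delta>"
    and cc: "\<forall>m\<in>M. c m \<in> constants K \<Lambda> D S" using P Pd unfolding dpolys_def by auto
  show ?thesis unfolding dpoly_eval_def Pd fst_conv snd_conv id_def
    apply (rule closedset_finsum[OF CS fin])
    using CS cc dmono_cst[OF L S Sd eta] mk unfolding closedset_def by auto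
qed


definition lin_indep :: "'a set \<Rightarrow> 'a set \<Rightarrow> bool" where
  "lin_indep F B \<longleftrightarrow> finite B \<and> B \<subseteq> carrier K \<and>
     (\<forall>g. g \<in> B \<rightarrow> F \<longrightarrow> finsum K (\<lambda>b. g b \<otimes> b) B = \<zero> \<longrightarrow> (\<forall>b\<in>B. g b = \<zero>))"

lemma finsum_swap:
  assumes fa: "finite A" and fb: "finite B" and f: "\<And>a b. a \<in> A \<Longrightarrow> b \<in> B \<Longrightarrow> f a b \<in> carrier K"
  shows "finsum K (\<lambda>a. finsum K (\<lambda>b. f a b) B) A = finsum K (\<lambda>b. finsum K (\<lambda>a. f a b) A) B"
  using fa f
proof (induct A rule: finite_induct)
  case empty then show ?case by (simp add: finsum_zero)
next
  case (insert x A)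
  have "finsum K (\<lambda>a. finsum K (\<lambda>b. f a b) B) (insert x A) =
        finsum K (\<lambda>b. f x b) B \<oplus> finsum K (\<lambda>a. finsum K (\<lambda>b. f a b) B) A"
    using insert by (simp add: Pi_def)
  also have "\<dots> = finsum K (\<lambda>b. f x b) B \<oplus> finsum K (\<lambda>b. finsum K (\<lambda>a. f a b) A) B"
    using insert by simp
  also have "\<dots> = finsum K (\<lambda>b. f x b \<oplus> finsum K (\<lambda>a. f a b) A) B"
    by (rule finsum_addf[symmetric]) (use insert in \<open>auto simp: Pi_def\<close>)
  also have "\<dots> = finsum K (\<lambda>b. finsum K (\<lambda>a. f a b) (insert x A)) B"
    by (rule finsum_cong') (use insert in \<open>auto simp: Pi_def\<close>)
  finally show ?case .
qed

lemma basis_exists: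
  assumes F: "closedset K F" and fin: "finite A" and Ac: "A \<subseteq> carrier K"
  shows "\<exists>B \<subseteq> A. lin_indep F B \<and> (\<forall>a\<in>A. \<exists>g\<in>B \<rightarrow> F. a = finsum K (\<lambda>b. g b \<otimes> b) B)"
proof -
  have Fc: "F \<subseteq> carrier K" and F0: "\<zero> \<in> F" and F1: "\<one> \<in> F"
    and Fm: "\<And>x y. x \<in> F \<Longrightarrow> y \<in> F \<Longrightarrow> x \<otimes> y \<in> F"
    and Fn: "\<And>x. x \<in> F \<Longrightarrow> \<ominus> x \<in> F"
    and Fi: "\<And>x. x \<in> F \<Longrightarrow> x \<noteq> \<zero> \<Longrightarrow> inv x \<in> F"
    using F unfolding closedset_def by auto
  define I where "I = {B. B \<subseteq> A \<and> lin_indep F B}"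
  have finI: "finite I" unfolding I_def using fin by (auto intro: finite_subset[of _ "Pow A"])
  have e: "{} \<in> I" unfolding I_def lin_indep_def by auto
  define n where "n = Max (card ` I)"
  have "n \<in> card ` I" unfolding n_def using finI e by (intro Max_in) auto
  then obtain B where BI: "B \<in> I" and cB: "card B = n" by auto
  have maxB: "\<And>B'. B' \<in> I \<Longrightarrow> card B' \<le> card B" using finI cB unfolding n_def by auto
  have BA: "B \<subseteq> A" and indB: "lin_indep F B" using BI unfolding I_def by auto
  have finB: "finite B" and Bc: "B \<subseteq> carrier K" using indB unfolding lin_indep_def by auto
  have "\<exists>g\<in>B \<rightarrow> F. a = finsum K (\<lambda>b. g b \<otimes> b) B" if aA: "a \<in> A" for a
  proof (cases "a \<in> B")
    case True
    let ?g = "\<lambda>b. if b = a then \<one> else \<zero>"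
    have "finsum K (\<lambda>b. ?g b \<otimes> b) B = finsum K (\<lambda>b. if b = a then b else \<zero>) B"
      by (rule finsum_cong') (use Bc in auto)
    also have "\<dots> = a" using add.finprod_singleton_swap[OF True finB, of "\<lambda>b. b"] Bc by auto
    finally show ?thesis using F0 F1 by (intro bexI[of _ ?g]) auto
  next
    case False
    have "insert a B \<notin> I"
    proof
      assume "insert a B \<in> I"
      then have "card (insert a B) \<le> card B" by (rule maxB)
      then show False using False finB by simp
    qed
    then have "\<not> lin_indep F (insert a B)" using aA BA unfolding I_def by auto
    then obtain g where g: "g \<in> insert a B \<rightarrow> F" and s0: "finsum K (\<lambda>b. g b \<otimes> b) (insert a B) = \<zero>"
      and nz: "\<exists>b\<in>insert a B. g b \<noteq> \<zero>"
      unfolding lin_indep_def using finB Bc aA Ac by auto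
    have gc: "\<And>b. b \<in> insert a B \<Longrightarrow> g b \<in> carrier K" using g Fc by auto
    have ac: "a \<in> carrier K" using aA Ac by auto
    have sc: "finsum K (\<lambda>b. g b \<otimes> b) B \<in> carrier K" using gc Bc by (intro finsum_closed) auto
    have s1: "g a \<otimes> a \<oplus> finsum K (\<lambda>b. g b \<otimes> b) B = \<zero>"
      using s0 finB False gc Bc ac by (subst (asm) finsum_insert) (auto simp: Pi_def)
    have ga: "g a \<noteq> \<zero>"
    proof
      assume "g a = \<zero>"
      then have "finsum K (\<lambda>b. g b \<otimes> b) B = \<zero>" using s1 sc ac by simp
      then have "\<forall>b\<in>B. g b = \<zero>" using indB g unfolding lin_indep_def by auto
      then show False using nz \<open>g a = \<zero>\<close> by auto
    qed
    have gac: "g a \<in> carrier K" using gc by auto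
    have gaF: "g a \<in> F" using g by auto
    have gu: "g a \<in> Units K" using ga gac field_Units by blast
    have ic: "inv (g a) \<in> carrier K" using gu by simp
    have il: "inv (g a) \<otimes> g a = \<one>" using gu by simp
    let ?h = "\<lambda>b. (\<ominus> (inv (g a))) \<otimes> g b"
    have hF: "?h \<in> B \<rightarrow> F" using g Fm Fn Fi[OF gaF ga] by auto
    have "finsum K (\<lambda>b. ?h b \<otimes> b) B = finsum K (\<lambda>b. (\<ominus> (inv (g a))) \<otimes> (g b \<otimes> b)) B"
      by (rule finsum_cong') (use gc Bc ic in \<open>auto simp: m_assoc\<close>)
    also have "\<dots> = (\<ominus> (inv (g a))) \<otimes> finsum K (\<lambda>b. g b \<otimes> b) B"
      by (rule finsum_rdistr[symmetric]) (use gc Bc ic finB in auto)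
    also have "\<dots> = a"
    proof -
      have "finsum K (\<lambda>b. g b \<otimes> b) B = \<ominus> (g a \<otimes> a)"
        using s1 sc gac ac by (metis add.inv_equality add.m_comm m_closed)
      then show ?thesis using il ic gac ac sc by (simp) (algebra)
    qed
    finally show ?thesis using hF by (intro bexI[of _ ?h]) auto
  qed
  then show ?thesis using BA indB by blast
qed


end
context dctx begin
lemma SL:
  assumes L: "\<Lambda> \<subseteq> \<Delta>" and S: "closedset K k" and Sd: "\<And>d x. d \<in> \<Delta> \<Longrightarrow> x \<in> k \<Longrightarrow> D d x \<in> k"
    and E: "E \<subseteq> constants K \<Lambda> D (carrier K)" and ind: "lin_indep (constants K \<Lambda> D k) E"
  shows "g \<in> E \<rightarrow> k \<Longrightarrow> finsum K (\<lambda>e. g e \<otimes> e) E = \<zero> \<Longrightarrow> \<forall>e\<in>E. g e = \<zero>"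
proof (induct "card {e\<in>E. g e \<noteq> \<zero>}" arbitrary: g rule: less_induct)
  case less
  note g = less(2) and s0 = less(3)
  have finE: "finite E" and Ec: "E \<subseteq> carrier K" using ind unfolding lin_indep_def by auto
  have kc: "k \<subseteq> carrier K" using S unfolding closedset_def by blast
  have kmul: "\<And>x y. x \<in> k \<Longrightarrow> y \<in> k \<Longrightarrow> x \<otimes> y \<in> k" using S unfolding closedset_def by blast
  have kinv: "\<And>x. x \<in> k \<Longrightarrow> x \<noteq> \<zero> \<Longrightarrow> inv x \<in> k" using S unfolding closedset_def by blast
  have E0: "\<And>e d. e \<in> E \<Longrightarrow> d \<in> \<Lambda> \<Longrightarrow> D d e = \<zero>" using E unfolding constants_def by blast
  have Ec': "\<And>e. e \<in> E \<Longrightarrow> e \<in> carrier K" using Ec by blast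
  show ?case
  proof (rule ccontr)
    assume "\<not> (\<forall>e\<in>E. g e = \<zero>)"
    then obtain e0 where e0: "e0 \<in> E" and ge0: "g e0 \<noteq> \<zero>" by blast
    have gk: "\<And>e. e \<in> E \<Longrightarrow> g e \<in> k" using g by blast
    have gc: "\<And>e. e \<in> E \<Longrightarrow> g e \<in> carrier K" using gk kc by blast
    have gu: "g e0 \<in> Units K" using ge0 gc[OF e0] field_Units by blast
    have ic: "inv (g e0) \<in> carrier K" using gu by (rule Units_inv_closed)
    have il: "inv (g e0) \<otimes> g e0 = \<one>" using gu by (rule Units_l_inv)
    have ik: "inv (g e0) \<in> k" using kinv[OF gk[OF e0] ge0] .
    have i0: "inv (g e0) \<noteq> \<zero>"
    proof
      assume "inv (g e0) = \<zero>"
      then have "\<zero> = \<one>" using il gc[OF e0] by simp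
      then show False by simp
    qed
    define h where "h = (\<lambda>e. inv (g e0) \<otimes> g e)"
    have hk: "\<And>e. e \<in> E \<Longrightarrow> h e \<in> k" unfolding h_def using kmul[OF ik gk] by blast
    have hk': "h \<in> E \<rightarrow> k" using hk by blast
    have hc: "\<And>e. e \<in> E \<Longrightarrow> h e \<in> carrier K" using hk kc by blast
    have he0: "h e0 = \<one>" unfolding h_def using il .
    have hz: "\<And>e. e \<in> E \<Longrightarrow> (h e = \<zero>) = (g e = \<zero>)"
      unfolding h_def using integral_iff[OF ic gc] i0 by simp
    have hs: "finsum K (\<lambda>e. h e \<otimes> e) E = \<zero>"
    proof -
      have "finsum K (\<lambda>e. h e \<otimes> e) E = finsum K (\<lambda>e. inv (g e0) \<otimes> (g e \<otimes> e)) E"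
        by (rule finsum_cong') (simp_all add: h_def m_assoc gc Ec' ic Pi_def)
      also have "\<dots> = inv (g e0) \<otimes> finsum K (\<lambda>e. g e \<otimes> e) E"
        by (rule finsum_rdistr[symmetric]) (simp_all add: gc Ec' ic finE Pi_def)
      finally show ?thesis using s0 ic by simp
    qed
    have dh: "\<forall>e\<in>E. D d (h e) = \<zero>" if d: "d \<in> \<Lambda>" for d
    proof -
      have dD: "d \<in> \<Delta>" using d L by blast
      define g' where "g' = (\<lambda>e. D d (h e))"
      have g'k: "g' \<in> E \<rightarrow> k" using hk Sd[OF dD] unfolding g'_def by blast
      have eq1: "g' e \<otimes> e = D d (h e \<otimes> e)" if e: "e \<in> E" for e
        using D_mult[OF dD hc[OF e] Ec'[OF e]] E0[OF e d] hc[OF e] Ec'[OF e] dD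
        unfolding g'_def by simp
      have "finsum K (\<lambda>e. g' e \<otimes> e) E = finsum K (\<lambda>e. D d (h e \<otimes> e)) E"
        by (rule finsum_cong') (simp_all add: eq1 Pi_def hc Ec' dD)
      also have "\<dots> = D d (finsum K (\<lambda>e. h e \<otimes> e) E)"
        by (rule D_finsum[symmetric, OF dD finE]) (simp add: Pi_def hc Ec')
      finally have g's: "finsum K (\<lambda>e. g' e \<otimes> e) E = \<zero>" using hs dD by simp
      have sub: "{e\<in>E. g' e \<noteq> \<zero>} \<subseteq> {e\<in>E. g e \<noteq> \<zero>} - {e0}"
      proof
        fix e assume e: "e \<in> {e\<in>E. g' e \<noteq> \<zero>}"
        then have eE: "e \<in> E" and nz: "D d (h e) \<noteq> \<zero>" unfolding g'_def by auto
        have "e \<noteq> e0" using nz he0 dD by auto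
        moreover have "g e \<noteq> \<zero>" using nz hz[OF eE] dD by auto
        ultimately show "e \<in> {e\<in>E. g e \<noteq> \<zero>} - {e0}" using eE by blast
      qed
      have "card {e\<in>E. g' e \<noteq> \<zero>} < card {e\<in>E. g e \<noteq> \<zero>}"
      proof -
        have "card {e\<in>E. g' e \<noteq> \<zero>} \<le> card ({e\<in>E. g e \<noteq> \<zero>} - {e0})"
          using sub finE by (intro card_mono) auto
        also have "\<dots> < card {e\<in>E. g e \<noteq> \<zero>}"
          using e0 ge0 finE by (intro card_Diff1_less) auto
        finally show ?thesis .
      qed
      then have "\<forall>e\<in>E. g' e = \<zero>" using less(1)[OF _ g'k g's] by blast
      then show ?thesis unfolding g'_def by blast
    qed
    have "h \<in> E \<rightarrow> constants K \<Lambda> D k" using hk dh unfolding constants_def by blast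
    then have "\<forall>e\<in>E. h e = \<zero>" using ind hs unfolding lin_indep_def by blast
    then show False using he0 e0 by simp
  qed
qed

lemma LD:
  assumes L: "\<Lambda> \<subseteq> \<Delta>" and S: "closedset K k" and Sd: "\<And>d x. d \<in> \<Delta> \<Longrightarrow> x \<in> k \<Longrightarrow> D d x \<in> k"
    and Bk: "B \<subseteq> k" and ind: "lin_indep (constants K \<Lambda> D k) B"
    and x: "x \<in> B \<rightarrow> constants K \<Lambda> D (carrier K)"
    and s0: "finsum K (\<lambda>b. x b \<otimes> b) B = \<zero>"
  shows "\<forall>b\<in>B. x b = \<zero>"
proof -
  let ?C = "constants K \<Lambda> D k"
  have CS: "closedset K ?C" by (rule closedset_csts[OF L S])
  have Ck: "?C \<subseteq> k" unfolding constants_def by blast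
  have kc: "k \<subseteq> carrier K" using S unfolding closedset_def by blast
  have kmul: "\<And>x y. x \<in> k \<Longrightarrow> y \<in> k \<Longrightarrow> x \<otimes> y \<in> k" using S unfolding closedset_def by blast
  have finB: "finite B" and Bc: "B \<subseteq> carrier K" using ind unfolding lin_indep_def by auto
  have Bc': "\<And>b. b \<in> B \<Longrightarrow> b \<in> carrier K" using Bc by blast
  have CKc: "constants K \<Lambda> D (carrier K) \<subseteq> carrier K" unfolding constants_def by blast
  have xc: "\<And>b. b \<in> B \<Longrightarrow> x b \<in> carrier K" using x CKc by blast
  have xB: "x ` B \<subseteq> carrier K" using xc by blast
  obtain E where EX: "E \<subseteq> x ` B" and indE: "lin_indep ?C E"
    and sp: "\<forall>a\<in>x ` B. \<exists>g\<in>E \<rightarrow> ?C. a = finsum K (\<lambda>e. g e \<otimes> e) E"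
    using basis_exists[OF CS finite_imageI[OF finB] xB] by blast
  have finE: "finite E" and Ec: "E \<subseteq> carrier K" using indE unfolding lin_indep_def by auto
  have Ec': "\<And>e. e \<in> E \<Longrightarrow> e \<in> carrier K" using Ec by blast
  have ECK: "E \<subseteq> constants K \<Lambda> D (carrier K)" using EX x by blast
  have "\<forall>b\<in>B. \<exists>g. g \<in> E \<rightarrow> ?C \<and> x b = finsum K (\<lambda>e. g e \<otimes> e) E" using sp by blast
  then obtain G where G: "\<And>b. b \<in> B \<Longrightarrow> G b \<in> E \<rightarrow> ?C"
    and Gx: "\<And>b. b \<in> B \<Longrightarrow> x b = finsum K (\<lambda>e. G b e \<otimes> e) E" by metis
  have Gk: "\<And>b e. b \<in> B \<Longrightarrow> e \<in> E \<Longrightarrow> G b e \<in> k" using G Ck by blast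
  have Gc: "\<And>b e. b \<in> B \<Longrightarrow> e \<in> E \<Longrightarrow> G b e \<in> carrier K" using Gk kc by blast
  have step1: "x b \<otimes> b = finsum K (\<lambda>e. (G b e \<otimes> b) \<otimes> e) E" if b: "b \<in> B" for b
  proof -
    have "x b \<otimes> b = finsum K (\<lambda>e. G b e \<otimes> e) E \<otimes> b" using Gx[OF b] by simp
    also have "\<dots> = finsum K (\<lambda>e. G b e \<otimes> e \<otimes> b) E"
      by (rule finsum_ldistr) (simp_all add: finE Bc'[OF b] Gc[OF b] Ec' Pi_def)
    also have "\<dots> = finsum K (\<lambda>e. (G b e \<otimes> b) \<otimes> e) E"
    proof (rule finsum_cong')
      show "E = E" ..
      show "(\<lambda>e. (G b e \<otimes> b) \<otimes> e) \<in> E \<rightarrow> carrier K" by (simp add: Bc'[OF b] Gc[OF b] Ec' Pi_def)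
      fix e assume e: "e \<in> E"
      show "G b e \<otimes> e \<otimes> b = G b e \<otimes> b \<otimes> e"
        using Gc[OF b e] Bc'[OF b] Ec'[OF e] by (simp add: m_ac)
    qed
    finally show ?thesis .
  qed
  have "finsum K (\<lambda>b. x b \<otimes> b) B = finsum K (\<lambda>b. finsum K (\<lambda>e. (G b e \<otimes> b) \<otimes> e) E) B"
    by (rule finsum_cong') (simp_all add: step1 Pi_def Gc Bc' Ec')
  also have "\<dots> = finsum K (\<lambda>e. finsum K (\<lambda>b. (G b e \<otimes> b) \<otimes> e) B) E"
    by (rule finsum_swap) (simp_all add: Gc Bc' Ec' finE finB)
  also have "\<dots> = finsum K (\<lambda>e. finsum K (\<lambda>b. G b e \<otimes> b) B \<otimes> e) E"
  proof (rule finsum_cong')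
    show "E = E" ..
    show "(\<lambda>e. finsum K (\<lambda>b. G b e \<otimes> b) B \<otimes> e) \<in> E \<rightarrow> carrier K"
      using Gc Bc' Ec' by (auto intro!: finsum_closed)
    fix e assume e: "e \<in> E"
    show "finsum K (\<lambda>b. (G b e \<otimes> b) \<otimes> e) B = finsum K (\<lambda>b. G b e \<otimes> b) B \<otimes> e"
      by (rule finsum_ldistr[symmetric]) (simp_all add: finB Ec'[OF e] Gc[OF _ e] Bc' Pi_def)
  qed
  finally have s1: "finsum K (\<lambda>e. finsum K (\<lambda>b. G b e \<otimes> b) B \<otimes> e) E = \<zero>" using s0 by simp
  have gk: "(\<lambda>e. finsum K (\<lambda>b. G b e \<otimes> b) B) \<in> E \<rightarrow> k"
  proof
    fix e assume e: "e \<in> E"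
    show "finsum K (\<lambda>b. G b e \<otimes> b) B \<in> k"
      by (rule closedset_finsum[OF S finB]) (use Bk Gk[OF _ e] kmul in blast)
  qed
  have z1: "\<forall>e\<in>E. finsum K (\<lambda>b. G b e \<otimes> b) B = \<zero>"
    by (rule SL[OF L S Sd ECK indE gk s1])
  have z2: "G b e = \<zero>" if b: "b \<in> B" and e: "e \<in> E" for b e
  proof -
    have "(\<lambda>b. G b e) \<in> B \<rightarrow> ?C" using G e by blast
    then show "G b e = \<zero>" using ind z1 e b unfolding lin_indep_def by blast
  qed
  show ?thesis
  proof
    fix b assume b: "b \<in> B"
    have "x b = finsum K (\<lambda>e. G b e \<otimes> e) E" by (rule Gx[OF b])
    also have "\<dots> = finsum K (\<lambda>e. \<zero>) E" by (rule finsum_cong') (simp_all add: z2[OF b] Ec')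
    finally show "x b = \<zero>" by simp
  qed
qed

lemma decomp:
  assumes L: "\<Lambda> \<subseteq> \<Delta>" and S: "closedset K S" and Sd: "\<And>d x. d \<in> \<Delta> \<Longrightarrow> x \<in> S \<Longrightarrow> D d x \<in> S"
    and eta: "\<forall>i<r. \<eta> i \<in> constants K \<Lambda> D S"
    and fin: "finite M" and mk: "\<forall>m\<in>M. \<forall>v\<in>Poly_Mapping.keys m. fst v < r \<and> set (snd v) \<subseteq> \<Delta>"
    and finB: "finite B" and Bc: "B \<subseteq> carrier K"
    and Gc: "\<And>m b. m \<in> M \<Longrightarrow> b \<in> B \<Longrightarrow> G m b \<in> carrier K"
    and Gs: "\<And>m. m \<in> M \<Longrightarrow> c m = finsum K (\<lambda>b. G m b \<otimes> b) B"
  shows "dpoly_eval K D id (M, c) \<eta> =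
     finsum K (\<lambda>b. dpoly_eval K D id ({m\<in>M. \<forall>v\<in>Poly_Mapping.keys m. set (snd v) \<subseteq> \<Delta> - \<Lambda>}, \<lambda>m. G m b) \<eta> \<otimes> b) B"
proof -
  let ?SP = "{m\<in>M. \<forall>v\<in>Poly_Mapping.keys m. set (snd v) \<subseteq> \<Delta> - \<Lambda>}"
  let ?mu = "\<lambda>m. dmono_val K D \<eta> m"
  have CS: "closedset K (constants K \<Lambda> D S)" by (rule closedset_csts[OF L S])
  have muc: "\<And>m. m \<in> M \<Longrightarrow> ?mu m \<in> carrier K"
    using dmono_cst[OF L S Sd eta] mk CS unfolding closedset_def by blast
  have Bc': "\<And>b. b \<in> B \<Longrightarrow> b \<in> carrier K" using Bc by blast
  have cc: "\<And>m. m \<in> M \<Longrightarrow> c m \<in> carrier K" using Gs Gc Bc' by (auto intro!: finsum_closed)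
  have finSP: "finite ?SP" using fin by simp
  have mu0: "\<And>m. m \<in> M - ?SP \<Longrightarrow> ?mu m = \<zero>"
  proof -
    fix m assume m: "m \<in> M - ?SP"
    show "?mu m = \<zero>"
      by (rule dmono_zero[OF L S Sd eta]) (use m mk in auto)
  qed
  have "dpoly_eval K D id (M, c) \<eta> = finsum K (\<lambda>m. c m \<otimes> ?mu m) M"
    unfolding dpoly_eval_def by simp
  also have "\<dots> = finsum K (\<lambda>m. c m \<otimes> ?mu m) ?SP"
  proof (rule add.finprod_mono_neutral_cong_left[symmetric])
    show "finite M" by (rule fin)
    show "?SP \<subseteq> M" by blast
    show "\<And>i. i \<in> M - ?SP \<Longrightarrow> c i \<otimes> ?mu i = \<zero>" using mu0 cc by simp
    show "\<And>x. x \<in> ?SP \<Longrightarrow> c x \<otimes> ?mu x = c x \<otimes> ?mu x" by simp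
    show "(\<lambda>m. c m \<otimes> ?mu m) \<in> M \<rightarrow> carrier K" using cc muc by simp
  qed
  also have "\<dots> = finsum K (\<lambda>m. finsum K (\<lambda>b. (G m b \<otimes> ?mu m) \<otimes> b) B) ?SP"
  proof (rule finsum_cong')
    show "?SP = ?SP" ..
    show "(\<lambda>m. finsum K (\<lambda>b. (G m b \<otimes> ?mu m) \<otimes> b) B) \<in> ?SP \<rightarrow> carrier K"
      using Gc muc Bc' by (auto intro!: finsum_closed)
    fix m assume m: "m \<in> ?SP"
    then have mM: "m \<in> M" by blast
    have "c m \<otimes> ?mu m = finsum K (\<lambda>b. G m b \<otimes> b) B \<otimes> ?mu m" using Gs[OF mM] by simp
    also have "\<dots> = finsum K (\<lambda>b. G m b \<otimes> b \<otimes> ?mu m) B"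
      by (rule finsum_ldistr) (simp_all add: finB muc[OF mM] Gc[OF mM] Bc' Pi_def)
    also have "\<dots> = finsum K (\<lambda>b. (G m b \<otimes> ?mu m) \<otimes> b) B"
    proof (rule finsum_cong')
      show "B = B" ..
      show "(\<lambda>b. (G m b \<otimes> ?mu m) \<otimes> b) \<in> B \<rightarrow> carrier K" by (simp add: Gc[OF mM] muc[OF mM] Bc' Pi_def)
      fix b assume b: "b \<in> B"
      show "G m b \<otimes> b \<otimes> ?mu m = G m b \<otimes> ?mu m \<otimes> b"
        using Gc[OF mM b] Bc'[OF b] muc[OF mM] by (simp add: m_ac)
    qed
    finally show "c m \<otimes> ?mu m = finsum K (\<lambda>b. (G m b \<otimes> ?mu m) \<otimes> b) B" .
  qed
  also have "\<dots> = finsum K (\<lambda>b. finsum K (\<lambda>m. (G m b \<otimes> ?mu m) \<otimes> b) ?SP) B"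
    by (rule finsum_swap) (use Gc muc Bc' finSP finB in auto)
  also have "\<dots> = finsum K (\<lambda>b. finsum K (\<lambda>m. G m b \<otimes> ?mu m) ?SP \<otimes> b) B"
  proof (rule finsum_cong')
    show "B = B" ..
    show "(\<lambda>b. finsum K (\<lambda>m. G m b \<otimes> ?mu m) ?SP \<otimes> b) \<in> B \<rightarrow> carrier K"
      using Gc muc Bc' by (auto intro!: finsum_closed)
    fix b assume b: "b \<in> B"
    show "finsum K (\<lambda>m. (G m b \<otimes> ?mu m) \<otimes> b) ?SP = finsum K (\<lambda>m. G m b \<otimes> ?mu m) ?SP \<otimes> b"
      by (rule finsum_ldistr[symmetric]) (use finSP b Bc' Gc muc in auto)
  qed
  also have "\<dots> = finsum K (\<lambda>b. dpoly_eval K D id (?SP, \<lambda>m. G m b) \<eta> \<otimes> b) B"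
    unfolding dpoly_eval_def by simp
  finally show ?thesis .
qed

end
lemma trunc_eval: "dpoly_eval (trunc K) DE \<phi> P \<zeta> = dpoly_eval K DE \<phi> P \<zeta>"
  unfolding dpoly_eval_def dmono_val_def by simp

lemma trunc_add_pow: "add_pow (trunc K) (n::nat) \<one>\<^bsub>trunc K\<^esub> = add_pow K n \<one>\<^bsub>K\<^esub>"
  unfolding add_pow_def nat_pow_def by simp

lemma trunc_diff_field:
  assumes "diff_field K \<Delta> D" and "\<Theta> \<subseteq> \<Delta>"
  shows "diff_field (trunc K) \<Theta> D"
  using assms trunc_field[of K] finite_subset[of \<Theta> \<Delta>]
  unfolding diff_field_def char_zero_def derivation_def trunc_add_pow
  by (simp add: subset_iff)

lemma id_hom: "S \<subseteq> carrier K \<Longrightarrow> id \<in> ring_hom (K\<lparr>carrier := S\<rparr>) (trunc K)"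
  unfolding ring_hom_def by auto

lemma dpolys_mono: "S1 \<subseteq> S2 \<Longrightarrow> T1 \<subseteq> T2 \<Longrightarrow> dpolys S1 T1 r \<subseteq> dpolys S2 T2 r"
  unfolding dpolys_def by fastforce

context dctx begin
lemma main_lemma:
  assumes df: "diff_field K \<Delta> D"
    and sub: "diff_subfield K \<Delta> D k"
    and L: "\<Lambda> \<subseteq> \<Delta>"
    and dc: "diff_closed K (\<Delta> - \<Lambda>) D (constants K \<Lambda> D k)"
    and ce: "constrained_ext K \<Delta> D k"
    and cC: "c \<in> constants K \<Lambda> D (carrier K)"
  shows "c \<in> k"
proof -
  have sfk: "subfield k K" and Dk: "\<And>d x. d \<in> \<Delta> \<Longrightarrow> x \<in> k \<Longrightarrow> D d x \<in> k"
    using sub unfolding diff_subfield_def by auto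
  have Sk: "closedset K k" by (rule closedset_subfield[OF sfk])
  have kc: "k \<subseteq> carrier K" using Sk unfolding closedset_def by blast
  have SK: "closedset K (carrier K)" by (rule closedset_carrier)
  have DK: "\<And>d x. d \<in> \<Delta> \<Longrightarrow> x \<in> carrier K \<Longrightarrow> D d x \<in> carrier K" by simp
  let ?C = "constants K \<Lambda> D k"
  let ?CK = "constants K \<Lambda> D (carrier K)"
  have CS: "closedset K ?C" by (rule closedset_csts[OF L Sk])
  have Ck: "?C \<subseteq> k" unfolding constants_def by blast
  have CCK: "?C \<subseteq> ?CK" using kc unfolding constants_def by blast
  have CKc: "?CK \<subseteq> carrier K" unfolding constants_def by blast
  define \<eta> where "\<eta> = (\<lambda>_::nat. c)"
  have cc: "c \<in> carrier K" using cC CKc by blast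
  have "constrained K \<Delta> D k 1 \<eta>" using ce cc unfolding constrained_ext_def \<eta>_def by simp
  then obtain Ps Q where finPs: "finite Ps" and Psd: "Ps \<subseteq> dpolys k \<Delta> 1" and Qd: "Q \<in> dpolys k \<Delta> 1"
    and Ps0: "\<forall>P\<in>Ps. dpoly_eval K D id P \<eta> = \<zero>" and Q0: "dpoly_eval K D id Q \<eta> \<noteq> \<zero>"
    and ext: "\<forall>(E::'a ring) DE \<phi> \<zeta>. diff_ext K \<Delta> D k E DE \<phi> \<longrightarrow> (\<forall>i<1. \<zeta> i \<in> carrier E) \<longrightarrow>
       (\<forall>P\<in>Ps. dpoly_eval E DE \<phi> P \<zeta> = \<zero>\<^bsub>E\<^esub>) \<longrightarrow> dpoly_eval E DE \<phi> Q \<zeta> \<noteq> \<zero>\<^bsub>E\<^esub> \<longrightarrow>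
       (\<exists>\<psi>. \<psi> \<in> ring_iso (K\<lparr>carrier := dring_gen K \<Delta> D k 1 \<eta>\<rparr>)
                         (E\<lparr>carrier := dring_gen E \<Delta> DE (\<phi> ` k) 1 \<zeta>\<rparr>) \<and>
             (\<forall>x\<in>k. \<psi> x = \<phi> x) \<and> (\<forall>i<1. \<psi> (\<eta> i) = \<zeta> i) \<and>
             (\<forall>d\<in>\<Delta>. \<forall>x\<in>dring_gen K \<Delta> D k 1 \<eta>. \<psi> (D d x) = DE d (\<psi> x)))"
    unfolding constrained_def apply (elim exE conjE) apply (rule that) by assumption+
  define PQ where "PQ = insert Q Ps"
  have finPQ: "finite PQ" unfolding PQ_def using finPs by simp
  have PQd: "\<And>P. P \<in> PQ \<Longrightarrow> P \<in> dpolys k \<Delta> 1" unfolding PQ_def using Psd Qd by blast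
  have finM: "\<And>P. P \<in> PQ \<Longrightarrow> finite (fst P)" using PQd unfolding dpolys_def by auto
  have keysP: "\<forall>m\<in>fst P. \<forall>v\<in>Poly_Mapping.keys m. fst v < 1 \<and> set (snd v) \<subseteq> \<Delta>" if P: "P \<in> PQ" for P
    using PQd[OF P] unfolding dpolys_def by (cases P) simp
  have coefk: "\<And>P m. P \<in> PQ \<Longrightarrow> m \<in> fst P \<Longrightarrow> snd P m \<in> k"
    using PQd unfolding dpolys_def by auto
  define A where "A = (\<Union>P\<in>PQ. snd P ` fst P)"
  have finA: "finite A" unfolding A_def using finPQ finM by blast
  have Ak: "A \<subseteq> k" unfolding A_def using coefk by blast
  have Ac: "A \<subseteq> carrier K" using Ak kc by blast
  obtain B where BA: "B \<subseteq> A" and indB: "lin_indep ?C B"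
    and spB: "\<forall>a\<in>A. \<exists>g\<in>B \<rightarrow> ?C. a = finsum K (\<lambda>b. g b \<otimes> b) B"
    using basis_exists[OF CS finA Ac] by blast
  have finB: "finite B" and Bc: "B \<subseteq> carrier K" using indB unfolding lin_indep_def by auto
  have Bk: "B \<subseteq> k" using BA Ak by blast
  have "\<forall>a\<in>A. \<exists>g. g \<in> B \<rightarrow> ?C \<and> a = finsum K (\<lambda>b. g b \<otimes> b) B" using spB by blast
  then obtain \<gamma> where \<gamma>C: "\<And>a. a \<in> A \<Longrightarrow> \<gamma> a \<in> B \<rightarrow> ?C"
    and \<gamma>s: "\<And>a. a \<in> A \<Longrightarrow> a = finsum K (\<lambda>b. \<gamma> a b \<otimes> b) B" by metis
  have inA: "\<And>P m. P \<in> PQ \<Longrightarrow> m \<in> fst P \<Longrightarrow> snd P m \<in> A" unfolding A_def by blast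
  define SP where "SP = (\<lambda>P::'d dmono set \<times> ('d dmono \<Rightarrow> 'a). {m\<in>fst P. \<forall>v\<in>Poly_Mapping.keys m. set (snd v) \<subseteq> \<Delta> - \<Lambda>})"
  define Pb where "Pb = (\<lambda>(P::'d dmono set \<times> ('d dmono \<Rightarrow> 'a)) (b::'a). (SP P, \<lambda>m. \<gamma> (snd P m) b))"
  have Pbd: "Pb P b \<in> dpolys ?C (\<Delta> - \<Lambda>) 1" if P: "P \<in> PQ" and b: "b \<in> B" for P b
  proof -
    have "\<gamma> (snd P m) b \<in> ?C" if m: "m \<in> fst P" for m
      using \<gamma>C[OF inA[OF P m]] b by blast
    then show ?thesis unfolding Pb_def SP_def dpolys_def using finM[OF P] keysP[OF P] by auto
  qed
  have PbdK: "Pb P b \<in> dpolys ?CK \<Delta> 1" if P: "P \<in> PQ" and b: "b \<in> B" for P b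
    using Pbd[OF P b] dpolys_mono[OF CCK, of "\<Delta> - \<Lambda>" \<Delta> 1] by blast
  have Pbdk: "Pb P b \<in> dpolys ?C \<Delta> 1" if P: "P \<in> PQ" and b: "b \<in> B" for P b
    using Pbd[OF P b] dpolys_mono[of ?C ?C "\<Delta> - \<Lambda>" \<Delta> 1] by blast
  have dec: "dpoly_eval K D id P z = finsum K (\<lambda>b. dpoly_eval K D id (Pb P b) z \<otimes> b) B"
    if P: "P \<in> PQ" and S: "closedset K S" and Sd: "\<And>d x. d \<in> \<Delta> \<Longrightarrow> x \<in> S \<Longrightarrow> D d x \<in> S"
      and z: "\<forall>i<1. z i \<in> constants K \<Lambda> D S" for P S z
  proof -
    obtain M cf where Pe: "P = (M, cf)" by (cases P)
    have "dpoly_eval K D id (M, cf) z =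
       finsum K (\<lambda>b. dpoly_eval K D id ({m\<in>M. \<forall>v\<in>Poly_Mapping.keys m. set (snd v) \<subseteq> \<Delta> - \<Lambda>}, \<lambda>m. \<gamma> (cf m) b) z \<otimes> b) B"
    proof (rule decomp[OF L S Sd z])
      show "finite M" using finM[OF P] Pe by simp
      show "\<forall>m\<in>M. \<forall>v\<in>Poly_Mapping.keys m. fst v < 1 \<and> set (snd v) \<subseteq> \<Delta>" using keysP[OF P] Pe by simp
      show "finite B" by (rule finB)
      show "B \<subseteq> carrier K" by (rule Bc)
      show "\<gamma> (cf m) b \<in> carrier K" if m: "m \<in> M" and b: "b \<in> B" for m b
        using \<gamma>C[OF inA[OF P, of m]] m b Pe CS unfolding closedset_def by auto
      show "cf m = finsum K (\<lambda>b. \<gamma> (cf m) b \<otimes> b) B" if m: "m \<in> M" for m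
        using \<gamma>s[OF inA[OF P, of m]] m Pe by simp
    qed
    then show ?thesis unfolding Pe Pb_def SP_def by simp
  qed
  have etaC: "\<forall>i<1. \<eta> i \<in> ?CK" using cC unfolding \<eta>_def by blast
  have evc: "\<And>P b. P \<in> PQ \<Longrightarrow> b \<in> B \<Longrightarrow> dpoly_eval K D id (Pb P b) \<eta> \<in> ?CK"
    by (rule dpoly_cst[OF L SK DK etaC PbdK])
  have Pb0: "dpoly_eval K D id (Pb P b) \<eta> = \<zero>" if P: "P \<in> Ps" and b: "b \<in> B" for P b
  proof -
    have PPQ: "P \<in> PQ" using P unfolding PQ_def by blast
    have "finsum K (\<lambda>b. dpoly_eval K D id (Pb P b) \<eta> \<otimes> b) B = \<zero>"
      using dec[OF PPQ SK DK etaC] Ps0 P by simp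
    then show ?thesis using LD[OF L Sk Dk Bk indB, of "\<lambda>b. dpoly_eval K D id (Pb P b) \<eta>"] evc[OF PPQ] b
      by blast
  qed
  have QPQ: "Q \<in> PQ" unfolding PQ_def by blast
  obtain b0 where b0: "b0 \<in> B" and Qb0: "dpoly_eval K D id (Pb Q b0) \<eta> \<noteq> \<zero>"
  proof -
    have "\<exists>b0\<in>B. dpoly_eval K D id (Pb Q b0) \<eta> \<noteq> \<zero>"
    proof (rule ccontr)
      assume "\<not> ?thesis"
      then have "\<And>b. b \<in> B \<Longrightarrow> dpoly_eval K D id (Pb Q b) \<eta> \<otimes> b = \<zero>" using Bc by auto
      then have "finsum K (\<lambda>b. dpoly_eval K D id (Pb Q b) \<eta> \<otimes> b) B = finsum K (\<lambda>b. \<zero>) B"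
        by (intro finsum_cong') auto
      then show False using dec[OF QPQ SK DK etaC] Q0 by simp
    qed
    then show ?thesis using that by blast
  qed
  define Ps' where "Ps' = (\<lambda>(P, b). Pb P b) ` (Ps \<times> B)"
  have finPs': "finite Ps'" unfolding Ps'_def using finPs finB by simp
  have Ps'd: "Ps' \<subseteq> dpolys ?C (\<Delta> - \<Lambda>) 1" unfolding Ps'_def PQ_def using Pbd unfolding PQ_def by auto
  have Q'd: "Pb Q b0 \<in> dpolys ?C (\<Delta> - \<Lambda>) 1" using Pbd[OF QPQ b0] .
  have dcl: "\<forall>n Ps Q. finite Ps \<longrightarrow> Ps \<subseteq> dpolys ?C (\<Delta> - \<Lambda>) n \<longrightarrow> Q \<in> dpolys ?C (\<Delta> - \<Lambda>) n \<longrightarrow>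
    (\<exists>(E::'a ring) DE \<phi> \<zeta>. diff_ext K (\<Delta> - \<Lambda>) D ?C E DE \<phi> \<and> (\<forall>i<n. \<zeta> i \<in> carrier E) \<and>
       (\<forall>P\<in>Ps. dpoly_eval E DE \<phi> P \<zeta> = \<zero>\<^bsub>E\<^esub>) \<and> dpoly_eval E DE \<phi> Q \<zeta> \<noteq> \<zero>\<^bsub>E\<^esub>) \<longrightarrow>
    (\<exists>\<eta>. (\<forall>i<n. \<eta> i \<in> ?C) \<and>
       (\<forall>P\<in>Ps. dpoly_eval K D id P \<eta> = \<zero>) \<and> dpoly_eval K D id Q \<eta> \<noteq> \<zero>)"
    using dc unfolding diff_closed_def by blast
  have dext1: "diff_ext K (\<Delta> - \<Lambda>) D ?C (trunc K) D id"
    unfolding diff_ext_def using trunc_diff_field[OF df, of "\<Delta> - \<Lambda>"] id_hom[of ?C K] Ck kc by auto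
  have "\<exists>(E::'a ring) DE \<phi> \<zeta>. diff_ext K (\<Delta> - \<Lambda>) D ?C E DE \<phi> \<and> (\<forall>i<1. \<zeta> i \<in> carrier E) \<and>
       (\<forall>P\<in>Ps'. dpoly_eval E DE \<phi> P \<zeta> = \<zero>\<^bsub>E\<^esub>) \<and> dpoly_eval E DE \<phi> (Pb Q b0) \<zeta> \<noteq> \<zero>\<^bsub>E\<^esub>"
  proof (intro exI conjI)
    show "diff_ext K (\<Delta> - \<Lambda>) D ?C (trunc K) D id" by (rule dext1)
    show "\<forall>i<1. \<eta> i \<in> carrier (trunc K)" using cc unfolding \<eta>_def by simp
    show "\<forall>P\<in>Ps'. dpoly_eval (trunc K) D id P \<eta> = \<zero>\<^bsub>trunc K\<^esub>"
      unfolding Ps'_def trunc_eval using Pb0 by auto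
    show "dpoly_eval (trunc K) D id (Pb Q b0) \<eta> \<noteq> \<zero>\<^bsub>trunc K\<^esub>"
      unfolding trunc_eval using Qb0 by simp
  qed
  then have "\<exists>\<eta>. (\<forall>i<1. \<eta> i \<in> ?C) \<and>
       (\<forall>P\<in>Ps'. dpoly_eval K D id P \<eta> = \<zero>) \<and> dpoly_eval K D id (Pb Q b0) \<eta> \<noteq> \<zero>"
    by (rule dcl[rule_format, OF finPs' Ps'd Q'd])
  then obtain \<zeta> where \<zeta>C: "\<forall>i<1. \<zeta> i \<in> ?C" and \<zeta>P: "\<forall>P\<in>Ps'. dpoly_eval K D id P \<zeta> = \<zero>"
    and \<zeta>Q: "dpoly_eval K D id (Pb Q b0) \<zeta> \<noteq> \<zero>"
    by blast
  have evz: "\<And>P b. P \<in> PQ \<Longrightarrow> b \<in> B \<Longrightarrow> dpoly_eval K D id (Pb P b) \<zeta> \<in> ?C"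
    by (rule dpoly_cst[OF L Sk Dk \<zeta>C Pbdk])
  have zP: "dpoly_eval K D id P \<zeta> = \<zero>" if P: "P \<in> Ps" for P
  proof -
    have PPQ: "P \<in> PQ" using P unfolding PQ_def by blast
    have "\<And>b. b \<in> B \<Longrightarrow> dpoly_eval K D id (Pb P b) \<zeta> \<otimes> b = \<zero>"
      using \<zeta>P P Bc unfolding Ps'_def by auto
    then have "finsum K (\<lambda>b. dpoly_eval K D id (Pb P b) \<zeta> \<otimes> b) B = finsum K (\<lambda>b. \<zero>) B"
      by (intro finsum_cong') auto
    then show ?thesis using dec[OF PPQ Sk Dk \<zeta>C] by simp
  qed
  have zQ: "dpoly_eval K D id Q \<zeta> \<noteq> \<zero>"
  proof
    assume "dpoly_eval K D id Q \<zeta> = \<zero>"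
    then have "finsum K (\<lambda>b. dpoly_eval K D id (Pb Q b) \<zeta> \<otimes> b) B = \<zero>"
      using dec[OF QPQ Sk Dk \<zeta>C] by simp
    moreover have "(\<lambda>b. dpoly_eval K D id (Pb Q b) \<zeta>) \<in> B \<rightarrow> ?C" using evz[OF QPQ] by blast
    ultimately have "\<forall>b\<in>B. dpoly_eval K D id (Pb Q b) \<zeta> = \<zero>" using indB unfolding lin_indep_def by blast
    then show False using \<zeta>Q b0 by blast
  qed
  have dext2: "diff_ext K \<Delta> D k (trunc K) D id"
    unfolding diff_ext_def using trunc_diff_field[OF df, of \<Delta>] id_hom[of k K] kc by auto
  have z0C: "\<zeta> 0 \<in> ?C" using \<zeta>C by simp
  have z0k: "\<zeta> 0 \<in> k" using z0C Ck by blast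
  obtain \<psi> where iso: "\<psi> \<in> ring_iso (K\<lparr>carrier := dring_gen K \<Delta> D k 1 \<eta>\<rparr>)
                         (trunc K\<lparr>carrier := dring_gen (trunc K) \<Delta> D (id ` k) 1 \<zeta>\<rparr>)"
    and \<psi>k: "\<forall>x\<in>k. \<psi> x = id x" and \<psi>\<eta>: "\<forall>i<1. \<psi> (\<eta> i) = \<zeta> i"
  proof -
    have h1: "\<forall>i<1. \<zeta> i \<in> carrier (trunc K)" using z0C Ck kc by auto
    have h2: "\<forall>P\<in>Ps. dpoly_eval (trunc K) D id P \<zeta> = \<zero>\<^bsub>trunc K\<^esub>" using zP unfolding trunc_eval by simp
    have h3: "dpoly_eval (trunc K) D id Q \<zeta> \<noteq> \<zero>\<^bsub>trunc K\<^esub>" using zQ unfolding trunc_eval by simp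
    note e = ext[THEN spec, of "trunc K", THEN spec, of D, THEN spec, of id, THEN spec, of \<zeta>]
    have "\<exists>\<psi>. \<psi> \<in> ring_iso (K\<lparr>carrier := dring_gen K \<Delta> D k 1 \<eta>\<rparr>)
                         (trunc K\<lparr>carrier := dring_gen (trunc K) \<Delta> D (id ` k) 1 \<zeta>\<rparr>) \<and>
             (\<forall>x\<in>k. \<psi> x = id x) \<and> (\<forall>i<1. \<psi> (\<eta> i) = \<zeta> i) \<and>
             (\<forall>d\<in>\<Delta>. \<forall>x\<in>dring_gen K \<Delta> D k 1 \<eta>. \<psi> (D d x) = D d (\<psi> x))"
      by (rule e[THEN mp, THEN mp, THEN mp, THEN mp, OF dext2 h1 h2 h3])
    then show ?thesis apply (elim exE conjE) apply (rule that) by assumption+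
  qed
  have inj: "inj_on \<psi> (dring_gen K \<Delta> D k 1 \<eta>)"
    using iso unfolding ring_iso_def bij_betw_def by simp
  have cG: "c \<in> dring_gen K \<Delta> D k 1 \<eta>"
  proof -
    have "dvar_val D \<eta> (0, []) = c" unfolding dvar_val_def \<eta>_def by simp
    then have "c \<in> {dvar_val D \<eta> (i, ds) | i ds. i < 1 \<and> set ds \<subseteq> \<Delta>}" by force
    then show ?thesis unfolding dring_gen_def by (blast intro: generate_ring.incl)
  qed
  have zG: "\<zeta> 0 \<in> dring_gen K \<Delta> D k 1 \<eta>"
    unfolding dring_gen_def using z0k by (blast intro: generate_ring.incl)
  have "\<psi> c = \<zeta> 0" using \<psi>\<eta> unfolding \<eta>_def by simp
  moreover have "\<psi> (\<zeta> 0) = \<zeta> 0" using \<psi>k z0k by simp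
  ultimately have "c = \<zeta> 0" using inj cG zG unfolding inj_on_def by metis
  then show ?thesis using z0k by simp
qed
end

theorem lemma9p3:
  fixes K :: "('a,'b) ring_scheme" and \<Delta> \<Lambda> :: "'d set"
    and D :: "'d \<Rightarrow> 'a \<Rightarrow> 'a" and k :: "'a set"
  assumes "diff_field K \<Delta> D"
    and "diff_subfield K \<Delta> D k"
    and "\<Lambda> \<subseteq> \<Delta>"
    and "diff_closed K (\<Delta> - \<Lambda>) D (constants K \<Lambda> D k)"
    and "constrained_ext K \<Delta> D k"
  shows "constants K \<Lambda> D (carrier K) = constants K \<Lambda> D k"
proof -
  note dfK = assms(1)[unfolded diff_field_def]
  have fK: "field K" using dfK by blast
  interpret dctx K \<Delta> D
    by (rule dctx.intro[OF fK], rule dctx_axioms.intro) (use dfK in auto)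
  have kc: "k \<subseteq> carrier K"
    using assms(2) closedset_subfield unfolding diff_subfield_def closedset_def by blast
  show ?thesis
  proof
    show "constants K \<Lambda> D (carrier K) \<subseteq> constants K \<Lambda> D k"
    proof
      fix c assume c: "c \<in> constants K \<Lambda> D (carrier K)"
      have "c \<in> k" by (rule main_lemma[OF assms c])
      then show "c \<in> constants K \<Lambda> D k" using c unfolding constants_def by blast
    qed
    show "constants K \<Lambda> D k \<subseteq> constants K \<Lambda> D (carrier K)" using kc unfolding constants_def by blast
  qed
qed

end
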